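(* Let $X$ be a $T_0$ space. If $GSI_2$-convergence in $X$ is topological, then $X$ is $QI_2$-continuous.
   Context: For a $T_0$ space $X$, the specialization order is $x\le y$ iff $x\in \mathrm{cl}\{y\}$; $\uparrow A=\{x: a\le x\text{ for some } a\in A\}$, $\uparrow x=\uparrow\{x\}$; $A^\uparrow$, $A^\downarrow$ are the sets of upper and lower bounds of $A$, and $A^\delta=(A^\uparrow)^\downarrow$. A nonempty subset $A$ of a space is irreducible if whenever $A\subseteq F_1\cup F_2$ with $F_1,F_2$ closed, $A\subseteq F_1$ or $A\subseteq F_2$. $X^{(<\omega)}$ is the set of nonempty finite subsets of $X$. $P_S(X)$ is the set of nonempty compact saturated (upper) subsets of $X$ with the upper Vietoris topology, basis $\{\square U: U\text{ open}\}$, $\square U=\{Q: Q\subseteq U\}$. A net is eventually in $U$ if from some index on all its terms lie in $U$; it converges to $x$ in a topology if it is eventually in every open set containing $x$. A net $(x_i)_{i\in I}$ $GSI_2$-converges to $x$ if there exists $\mathcal F\subseteq X^{(<\omega)}$ with $\{\uparrow G: G\in\mathcal F\}$ irreducible in $P_S(X)$ such that (i) for every open $U$, if $\uparrow G\subseteq U$ for some $G\in\mathcal F$ then $x_i\in U$ eventually, and (ii) $\bigcap_{G\in\mathcal F}\uparrow G\subseteq\uparrow x$. Let $\mathcal{O}(\mathcal{GSI}_2(X))$ be the topology of all $U\subseteq X$ such that every net $GSI_2$-converging to a point of $U$ is eventually in $U$. $GSI_2$-convergence in $X$ is topological if for every net and point, the net $GSI_2$-converges to the point iff it converges to it in the topology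 $\mathcal{O}(\mathcal{GSI}_2(X))$. For $A\subseteq X$, $x\in X$, $A\ll_{I_2}x$ means: for every irreducible $D\subseteq X$ with $x\in D^\delta$, $A\cap\mathrm{cl}D\ne\emptyset$. For $x\in X$, $w(x)=\{\uparrow F: F\in X^{(<\omega)}, F\ll_{I_2}x\}$. $X$ is $QI_2$-continuous if for every $x\in X$, $w(x)$ is an irreducible subset of $P_S(X)$ and $\uparrow x=\bigcap w(x)$. *)

theory Defs
  imports "HOL-Analysis.Analysis"
begin

definition T0_space :: "'a topology \<Rightarrow> bool" where
  "T0_space T \<longleftrightarrow> (\<forall>x\<in>topspace T. \<forall>y\<in>topspace T. x \<noteq> y \<longrightarrow>
      (\<exists>U. openin T U \<and> \<not> (x \<in> U \<longleftrightarrow> y \<in> U)))"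

definition spec_le :: "'a topology \<Rightarrow> 'a \<Rightarrow> 'a \<Rightarrow> bool" where
  "spec_le T x y \<longleftrightarrow> x \<in> topspace T \<and> y \<in> topspace T \<and> x \<in> T closure_of {y}"

definition up_set :: "'a topology \<Rightarrow> 'a set \<Rightarrow> 'a set" where
  "up_set T A = {x \<in> topspace T. \<exists>a\<in>A. spec_le T a x}"

definition upper_bounds :: "'a topology \<Rightarrow> 'a set \<Rightarrow> 'a set" where
  "upper_bounds T A = {y \<in> topspace T. \<forall>a\<in>A. spec_le T a y}"

definition lower_bounds :: "'a topology \<Rightarrow> 'a set \<Rightarrow> 'a set" where
  "lower_bounds T A = {y \<in> topspace T. \<forall>a\<in>A. spec_le T y a}"

definition delta_cut :: "'a topology \<Rightarrow> 'a set \<Rightarrow> 'a set" where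
  "delta_cut T A = lower_bounds T (upper_bounds T A)"

definition irreducible_in :: "'b topology \<Rightarrow> 'b set \<Rightarrow> bool" where
  "irreducible_in T A \<longleftrightarrow> A \<noteq> {} \<and> A \<subseteq> topspace T \<and>
     (\<forall>F1 F2. closedin T F1 \<and> closedin T F2 \<and> A \<subseteq> F1 \<union> F2 \<longrightarrow> A \<subseteq> F1 \<or> A \<subseteq> F2)"

definition fin_subsets :: "'a topology \<Rightarrow> 'a set set" where
  "fin_subsets T = {F. F \<subseteq> topspace T \<and> finite F \<and> F \<noteq> {}}"

definition PS :: "'a topology \<Rightarrow> 'a set set" where
  "PS T = {Q. Q \<subseteq> topspace T \<and> Q \<noteq> {} \<and> compactin T Q \<and> up_set T Q = Q}"

definition box :: "'a topology \<Rightarrow> 'a set \<Rightarrow> 'a set set" where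
  "box T U = {Q \<in> PS T. Q \<subseteq> U}"

definition upper_vietoris :: "'a topology \<Rightarrow> 'a set topology" where
  "upper_vietoris T = topology_generated_by {box T U | U. openin T U}"

text \<open>Nets in X are represented by filters on X (the eventuality filter of the net):
  a net is eventually in U iff the set U is eventually in the filter.\<close>
definition is_net :: "'a topology \<Rightarrow> 'a filter \<Rightarrow> bool" where
  "is_net T N \<longleftrightarrow> N \<noteq> bot \<and> eventually (\<lambda>y. y \<in> topspace T) N"

definition ev_in :: "'a filter \<Rightarrow> 'a set \<Rightarrow> bool" where
  "ev_in N U \<longleftrightarrow> eventually (\<lambda>y. y \<in> U) N"

definition GSI2_conv :: "'a topology \<Rightarrow> 'a filter \<Rightarrow> 'a \<Rightarrow> bool" where
  "GSI2_conv T N x \<longleftrightarrow> (\<exists>\<F>. \<F> \<subseteq> fin_subsets T \<and>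
      irreducible_in (upper_vietoris T) ((up_set T) ` \<F>) \<and>
      (\<forall>U. openin T U \<longrightarrow> (\<exists>G\<in>\<F>. up_set T G \<subseteq> U) \<longrightarrow> ev_in N U) \<and>
      (\<Inter>G\<in>\<F>. up_set T G) \<subseteq> up_set T {x})"

definition GSI2_opens :: "'a topology \<Rightarrow> 'a set set" where
  "GSI2_opens T = {U. U \<subseteq> topspace T \<and>
      (\<forall>N x. is_net T N \<longrightarrow> x \<in> U \<longrightarrow> GSI2_conv T N x \<longrightarrow> ev_in N U)}"

definition GSI2_topological :: "'a topology \<Rightarrow> bool" where
  "GSI2_topological T \<longleftrightarrow> (\<forall>N. \<forall>x\<in>topspace T. is_net T N \<longrightarrow>
      (GSI2_conv T N x \<longleftrightarrow> (\<forall>U\<in>GSI2_opens T. x \<in> U \<longrightarrow> ev_in N U)))"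

definition way_below_I2 :: "'a topology \<Rightarrow> 'a set \<Rightarrow> 'a \<Rightarrow> bool" where
  "way_below_I2 T A x \<longleftrightarrow> (\<forall>D. irreducible_in T D \<longrightarrow> x \<in> delta_cut T D \<longrightarrow>
      A \<inter> (T closure_of D) \<noteq> {})"

definition w_set :: "'a topology \<Rightarrow> 'a \<Rightarrow> 'a set set" where
  "w_set T x = {up_set T F | F. F \<in> fin_subsets T \<and> way_below_I2 T F x}"

definition QI2_continuous :: "'a topology \<Rightarrow> bool" where
  "QI2_continuous T \<longleftrightarrow> (\<forall>x\<in>topspace T.
      irreducible_in (upper_vietoris T) (w_set T x) \<and> up_set T {x} = \<Inter>(w_set T x))"

end

theory Submission
  imports Defs
begin

lemma spec_refl: "x \<in> topspace T \<Longrightarrow> spec_le T x x"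
  unfolding spec_le_def using closure_of_subset[of "{x}" T] by auto

lemma spec_closed: "closedin T C \<Longrightarrow> spec_le T a y \<Longrightarrow> y \<in> C \<Longrightarrow> a \<in> C"
  unfolding spec_le_def by (meson closure_of_minimal empty_subsetI insert_subset subsetD)

lemma spec_trans: "spec_le T a b \<Longrightarrow> spec_le T b c \<Longrightarrow> spec_le T a c"
  unfolding spec_le_def
  by (meson closedin_closure_of closure_of_minimal insert_subset subsetD empty_subsetI)

lemma spec_open: "openin T U \<Longrightarrow> spec_le T a y \<Longrightarrow> a \<in> U \<Longrightarrow> y \<in> U"
proof (rule ccontr)
  assume o: "openin T U" and s: "spec_le T a y" and a: "a \<in> U" and n: "y \<notin> U"
  have "closedin T (topspace T - U)" using o by blast
  moreover have "y \<in> topspace T - U" using s n unfolding spec_le_def by auto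
  ultimately have "a \<in> topspace T - U" using spec_closed s by metis
  with a show False by auto
qed

lemma up_open: "openin T U \<Longrightarrow> G \<subseteq> U \<Longrightarrow> up_set T G \<subseteq> U"
proof
  fix y assume o: "openin T U" and G: "G \<subseteq> U" and "y \<in> up_set T G"
  then obtain a where "a \<in> G" "spec_le T a y" unfolding up_set_def by blast
  then show "y \<in> U" using spec_open[OF o] G by blast
qed

lemma up_sub: "G \<subseteq> topspace T \<Longrightarrow> G \<subseteq> up_set T G"
proof
  fix g assume "G \<subseteq> topspace T" "g \<in> G"
  then show "g \<in> up_set T G" unfolding up_set_def using spec_refl[of g T] by auto
qed

lemma up_closed_disj: "closedin T C \<Longrightarrow> G \<inter> C = {} \<Longrightarrow> up_set T G \<inter> C = {}"
proof (rule ccontr)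
  assume c: "closedin T C" and d: "G \<inter> C = {}" and "up_set T G \<inter> C \<noteq> {}"
  then obtain y a where "a \<in> G" "spec_le T a y" "y \<in> C" unfolding up_set_def by blast
  then show False using spec_closed[OF c] d by blast
qed

lemma up_fin_PS:
  assumes "F \<in> fin_subsets T" shows "up_set T F \<in> PS T"
proof -
  have F: "F \<subseteq> topspace T" "finite F" "F \<noteq> {}" using assms by (auto simp: fin_subsets_def)
  have c: "compactin T (up_set T F)"
    unfolding compactin_def
  proof (intro conjI allI impI)
    show "up_set T F \<subseteq> topspace T" by (auto simp: up_set_def)
    fix \<U> assume h: "Ball \<U> (openin T) \<and> up_set T F \<subseteq> \<Union> \<U>"
    then have "\<forall>f\<in>F. \<exists>U\<in>\<U>. f \<in> U" using up_sub[OF F(1)] by blast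
    then obtain g where g: "\<forall>f\<in>F. g f \<in> \<U> \<and> f \<in> g f" by metis
    show "\<exists>\<F>. finite \<F> \<and> \<F> \<subseteq> \<U> \<and> up_set T F \<subseteq> \<Union> \<F>"
    proof (intro exI conjI)
      show "finite (g ` F)" using F by simp
      show "g ` F \<subseteq> \<U>" using g by blast
      show "up_set T F \<subseteq> \<Union> (g ` F)"
      proof
        fix y assume "y \<in> up_set T F"
        then obtain f where "f \<in> F" "spec_le T f y" by (auto simp: up_set_def)
        then have "g f \<in> \<U>" "f \<in> g f" using g by auto
        then have "y \<in> g f" using h spec_open[of T "g f" f y] \<open>spec_le T f y\<close> by blast
        then show "y \<in> \<Union> (g ` F)" using \<open>f \<in> F\<close> by blast
      qed
    qed
  qed
  have "up_set T (up_set T F) = up_set T F"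
  proof
    show "up_set T (up_set T F) \<subseteq> up_set T F"
    proof
      fix y assume "y \<in> up_set T (up_set T F)"
      then obtain z where z: "z \<in> up_set T F" "spec_le T z y" "y \<in> topspace T"
        unfolding up_set_def by blast
      then obtain f where f: "f \<in> F" "spec_le T f z" unfolding up_set_def by blast
      have "spec_le T f y" using spec_trans[OF f(2) z(2)] .
      then show "y \<in> up_set T F" using f(1) z(3) unfolding up_set_def by blast
    qed
    show "up_set T F \<subseteq> up_set T (up_set T F)"
      by (rule up_sub) (auto simp: up_set_def)
  qed
  moreover have "up_set T F \<noteq> {}" using up_sub[OF F(1)] F(3) by blast
  ultimately show ?thesis using c unfolding PS_def by (auto simp: up_set_def)
qed

lemma uv_topspace: "topspace (upper_vietoris T) = PS T"
proof -
  have "box T (topspace T) = PS T" unfolding box_def PS_def by auto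
  then show ?thesis unfolding upper_vietoris_def box_def
    by (auto simp: box_def)
qed

lemma uv_box_open: "openin T U \<Longrightarrow> openin (upper_vietoris T) (box T U)"
  unfolding upper_vietoris_def by (rule topology_generated_by_Basis) blast

lemma uv_open_basis:
  assumes "openin (upper_vietoris T) \<O>" "Q \<in> \<O>"
  shows "\<exists>U. openin T U \<and> Q \<in> box T U \<and> box T U \<subseteq> \<O>"
proof -
  have "generate_topology_on {box T U | U. openin T U} \<O>"
    using assms(1) unfolding upper_vietoris_def by (rule openin_topology_generated_by)
  then show ?thesis using assms(2)
  proof (induction arbitrary: Q)
    case Empty then show ?case by simp
  next
    case (Int a b)
    then obtain U1 U2 where "openin T U1" "Q \<in> box T U1" "box T U1 \<subseteq> a"
       "openin T U2" "Q \<in> box T U2" "box T U2 \<subseteq> b" by (meson IntD1 IntD2)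
    then show ?case by (intro exI[of _ "U1 \<inter> U2"]) (auto simp: box_def)
  next
    case (UN K)
    then obtain k where "k \<in> K" "Q \<in> k" by blast
    with UN.IH[of k Q] show ?case by blast
  next
    case (Basis s) then show ?case by blast
  qed
qed

lemma irr_nonempty: "irreducible_in X A \<Longrightarrow> A \<noteq> {}"
  by (simp add: irreducible_in_def)

lemma irr_fam:
  assumes irr: "irreducible_in (upper_vietoris T) (up_set T ` \<F>)"
    and o1: "openin T U1" and o2: "openin T U2"
    and g1: "G1 \<in> \<F>" "up_set T G1 \<subseteq> U1" and g2: "G2 \<in> \<F>" "up_set T G2 \<subseteq> U2"
  shows "\<exists>G3\<in>\<F>. up_set T G3 \<subseteq> U1 \<inter> U2"
proof (rule ccontr)
  assume n: "\<not> ?thesis"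
  let ?P = "topspace (upper_vietoris T)"
  define F1 where "F1 = ?P - box T U1"
  define F2 where "F2 = ?P - box T U2"
  have c1: "closedin (upper_vietoris T) F1" unfolding F1_def
    by (rule closedin_diff[OF closedin_topspace uv_box_open[OF o1]])
  have c2: "closedin (upper_vietoris T) F2" unfolding F2_def
    by (rule closedin_diff[OF closedin_topspace uv_box_open[OF o2]])
  have sub: "up_set T ` \<F> \<subseteq> ?P" using irr by (simp add: irreducible_in_def)
  have "up_set T ` \<F> \<subseteq> F1 \<union> F2"
  proof
    fix Q assume "Q \<in> up_set T ` \<F>"
    then obtain G where G: "G \<in> \<F>" "Q = up_set T G" by blast
    then have "\<not> (Q \<in> box T U1 \<and> Q \<in> box T U2)" using n by (auto simp: box_def)
    then show "Q \<in> F1 \<union> F2" using sub G unfolding F1_def F2_def by blast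
  qed
  then have "up_set T ` \<F> \<subseteq> F1 \<or> up_set T ` \<F> \<subseteq> F2"
    using irr c1 c2 unfolding irreducible_in_def by blast
  moreover have "up_set T G1 \<notin> F1" using g1 sub by (auto simp: F1_def box_def uv_topspace)
  moreover have "up_set T G2 \<notin> F2" using g2 sub by (auto simp: F2_def box_def uv_topspace)
  ultimately show False using g1 g2 by blast
qed

lemma rudin:
  assumes irr: "irreducible_in (upper_vietoris T) (up_set T ` \<F>)"
    and fs: "\<F> \<subseteq> fin_subsets T"
    and int: "(\<Inter>G\<in>\<F>. up_set T G) \<subseteq> up_set T {x}"
    and x: "x \<in> topspace T"
    and wb: "way_below_I2 T F x"
    and FU: "F \<subseteq> U" and oU: "openin T U"
  shows "\<exists>G\<in>\<F>. G \<subseteq> U"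
proof (rule ccontr)
  assume n: "\<not> ?thesis"
  have Fne: "\<F> \<noteq> {}" using irr_nonempty[OF irr] by blast
  have Gfin: "\<And>G. G \<in> \<F> \<Longrightarrow> finite G \<and> G \<subseteq> topspace T" using fs by (auto simp: fin_subsets_def)
  define \<A> where "\<A> = {Om. openin T Om \<and> U \<subseteq> Om \<and> (\<forall>G\<in>\<F>. \<not> G \<subseteq> Om)}"
  have "\<exists>M\<in>\<A>. \<forall>X\<in>\<A>. M \<subseteq> X \<longrightarrow> X = M"
  proof (rule subset_Zorn_nonempty)
    show "\<A> \<noteq> {}" using oU n unfolding \<A>_def by blast
    fix \<C> assume ne: "\<C> \<noteq> {}" and ch: "subset.chain \<A> \<C>"
    have CA: "\<C> \<subseteq> \<A>" using ch by (simp add: subset.chain_def)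
    have "openin T (\<Union>\<C>)" using CA unfolding \<A>_def by auto
    moreover have "U \<subseteq> \<Union>\<C>" using CA ne unfolding \<A>_def by auto
    moreover have "\<forall>G\<in>\<F>. \<not> G \<subseteq> \<Union>\<C>"
    proof (intro ballI notI)
      fix G assume G: "G \<in> \<F>" "G \<subseteq> \<Union>\<C>"
      then obtain B where "B \<in> \<C>" "G \<subseteq> B"
        using finite_subset_Union_chain[OF _ G(2) ne ch] Gfin by blast
      then show False using CA G unfolding \<A>_def by blast
    qed
    ultimately show "\<Union>\<C> \<in> \<A>" unfolding \<A>_def by blast
  qed
  then obtain Om where OA: "Om \<in> \<A>" and max: "\<And>X. X \<in> \<A> \<Longrightarrow> Om \<subseteq> X \<Longrightarrow> X = Om" by blast
  have oO: "openin T Om" and UO: "U \<subseteq> Om" and GO: "\<And>G. G \<in> \<F> \<Longrightarrow> \<not> G \<subseteq> Om"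
    using OA unfolding \<A>_def by auto
  define A where "A = topspace T - Om"
  have cA: "closedin T A" unfolding A_def using oO by blast
  have meet: "\<And>G. G \<in> \<F> \<Longrightarrow> G \<inter> A \<noteq> {}" using GO Gfin unfolding A_def by blast
  have irrA: "irreducible_in T A"
    unfolding irreducible_in_def
  proof (intro conjI allI impI)
    show "A \<noteq> {}" using meet Fne by blast
    show "A \<subseteq> topspace T" unfolding A_def by blast
    fix F1 F2 assume h: "closedin T F1 \<and> closedin T F2 \<and> A \<subseteq> F1 \<union> F2"
    show "A \<subseteq> F1 \<or> A \<subseteq> F2"
    proof (rule ccontr)
      assume nn: "\<not> (A \<subseteq> F1 \<or> A \<subseteq> F2)"
      define O1 where "O1 = Om \<union> (topspace T - F1)"
      define O2 where "O2 = Om \<union> (topspace T - F2)"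
      have o1: "openin T O1" unfolding O1_def using h oO by blast
      have o2: "openin T O2" unfolding O2_def using h oO by blast
      have "O1 \<noteq> Om" using nn unfolding O1_def A_def by blast
      then have "O1 \<notin> \<A>" using max[of O1] unfolding O1_def by blast
      then obtain G1 where G1: "G1 \<in> \<F>" "G1 \<subseteq> O1" using o1 UO unfolding \<A>_def O1_def by blast
      have "O2 \<noteq> Om" using nn unfolding O2_def A_def by blast
      then have "O2 \<notin> \<A>" using max[of O2] unfolding O2_def by blast
      then obtain G2 where G2: "G2 \<in> \<F>" "G2 \<subseteq> O2" using o2 UO unfolding \<A>_def O2_def by blast
      obtain G3 where G3: "G3 \<in> \<F>" "up_set T G3 \<subseteq> O1 \<inter> O2"
        using irr_fam[OF irr o1 o2 G1(1) up_open[OF o1 G1(2)] G2(1) up_open[OF o2 G2(2)]] by blast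
      have "G3 \<subseteq> O1 \<inter> O2" using G3(2) up_sub[of G3 T] Gfin[OF G3(1)] by blast
      moreover have "O1 \<inter> O2 \<inter> topspace T \<subseteq> Om" using h unfolding O1_def O2_def A_def by blast
      ultimately have "G3 \<subseteq> Om" using Gfin[OF G3(1)] by blast
      then show False using GO G3 by blast
    qed
  qed
  have "x \<in> delta_cut T A"
    unfolding delta_cut_def lower_bounds_def
  proof (intro CollectI conjI ballI x)
    fix y assume y: "y \<in> upper_bounds T A"
    have "y \<in> (\<Inter>G\<in>\<F>. up_set T G)"
    proof
      fix G assume G: "G \<in> \<F>"
      then obtain g where "g \<in> G" "g \<in> A" using meet by blast
      then show "y \<in> up_set T G" using y unfolding upper_bounds_def up_set_def by blast
    qed
    then show "spec_le T x y" using int unfolding up_set_def by blast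
  qed
  then have "F \<inter> (T closure_of A) \<noteq> {}" using wb irrA unfolding way_below_I2_def by blast
  then show False using cA FU UO unfolding A_def by (auto simp: closure_of_closedin)
qed


lemma gso_top: "topspace T \<in> GSI2_opens T"
  unfolding GSI2_opens_def by (auto simp: is_net_def ev_in_def)

lemma gso_int: "V1 \<in> GSI2_opens T \<Longrightarrow> V2 \<in> GSI2_opens T \<Longrightarrow> V1 \<inter> V2 \<in> GSI2_opens T"
  unfolding GSI2_opens_def ev_in_def by (auto intro: eventually_conj)

lemma net_D:
  assumes irr: "irreducible_in T D" and xd: "x \<in> delta_cut T D"
    and V: "V \<in> GSI2_opens T" "x \<in> V"
  shows "V \<inter> D \<noteq> {}"
proof -
  have Dt: "D \<subseteq> topspace T" "D \<noteq> {}" using irr by (auto simp: irreducible_in_def)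
  define F where "F = (\<lambda>P. \<exists>U. openin T U \<and> U \<inter> D \<noteq> {} \<and> (\<forall>y\<in>U \<inter> D. P y))"
  have isf: "is_filter F"
  proof
    show "F (\<lambda>x. True)" unfolding F_def using Dt by (intro exI[of _ "topspace T"]) auto
  next
    fix P Q assume "F (\<lambda>x. P x)" "F (\<lambda>x. Q x)"
    then obtain U1 U2 where U: "openin T U1" "U1 \<inter> D \<noteq> {}" "\<forall>y\<in>U1 \<inter> D. P y"
      "openin T U2" "U2 \<inter> D \<noteq> {}" "\<forall>y\<in>U2 \<inter> D. Q y" unfolding F_def by blast
    have "U1 \<inter> U2 \<inter> D \<noteq> {}"
    proof
      assume e: "U1 \<inter> U2 \<inter> D = {}"
      have "D \<subseteq> (topspace T - U1) \<union> (topspace T - U2)" using e Dt by blast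
      moreover have "closedin T (topspace T - U1)" "closedin T (topspace T - U2)" using U by blast+
      ultimately have "D \<subseteq> topspace T - U1 \<or> D \<subseteq> topspace T - U2"
        using irr unfolding irreducible_in_def by blast
      then show False using U by blast
    qed
    then show "F (\<lambda>x. P x \<and> Q x)" unfolding F_def using U
      by (intro exI[of _ "U1 \<inter> U2"]) auto
  next
    fix P Q assume "\<forall>x. P x \<longrightarrow> Q x" "F (\<lambda>x. P x)"
    then show "F (\<lambda>x. Q x)" unfolding F_def by blast
  qed
  define N where "N = Abs_filter F"
  have ev: "\<And>P. eventually P N \<longleftrightarrow> F P" unfolding N_def by (rule eventually_Abs_filter[OF isf])
  have net: "is_net T N"
    unfolding is_net_def
  proof
    show "N \<noteq> bot" unfolding eventually_False[symmetric] ev F_def by blast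
    show "eventually (\<lambda>y. y \<in> topspace T) N" unfolding ev F_def using Dt
      by (intro exI[of _ "topspace T"]) auto
  qed
  have conv: "GSI2_conv T N x"
    unfolding GSI2_conv_def
  proof (intro exI[of _ "(\<lambda>d. {d}) ` D"] conjI allI impI)
    show "(\<lambda>d. {d}) ` D \<subseteq> fin_subsets T" using Dt by (auto simp: fin_subsets_def)
    show "irreducible_in (upper_vietoris T) (up_set T ` (\<lambda>d. {d}) ` D)"
      unfolding irreducible_in_def
    proof (intro conjI allI impI)
      show "up_set T ` (\<lambda>d. {d}) ` D \<noteq> {}" using Dt by blast
      show "up_set T ` (\<lambda>d. {d}) ` D \<subseteq> topspace (upper_vietoris T)"
        using Dt up_fin_PS[of _ T] by (auto simp: uv_topspace fin_subsets_def)
      fix F1 F2 assume h: "closedin (upper_vietoris T) F1 \<and> closedin (upper_vietoris T) F2 \<and>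
          up_set T ` (\<lambda>d. {d}) ` D \<subseteq> F1 \<union> F2"
      have pre: "closedin T {d \<in> topspace T. up_set T {d} \<in> Fi}"
        if ci: "closedin (upper_vietoris T) Fi" for Fi
      proof -
        have oi: "openin (upper_vietoris T) (PS T - Fi)"
          using ci by (simp add: closedin_def uv_topspace)
        have "openin T {d \<in> topspace T. up_set T {d} \<in> PS T - Fi}"
        proof (subst openin_subopen, intro ballI)
          fix d assume d: "d \<in> {d \<in> topspace T. up_set T {d} \<in> PS T - Fi}"
          then obtain U where U: "openin T U" "up_set T {d} \<in> box T U" "box T U \<subseteq> PS T - Fi"
            using uv_open_basis[OF oi] by blast
          have "U \<subseteq> {d \<in> topspace T. up_set T {d} \<in> PS T - Fi}"
          proof
            fix y assume y: "y \<in> U"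
            have yt: "y \<in> topspace T" using U(1) y openin_subset by blast
            have "up_set T {y} \<in> PS T" using yt up_fin_PS[of "{y}" T] by (auto simp: fin_subsets_def)
            moreover have "up_set T {y} \<subseteq> U" using up_open[OF U(1)] y by blast
            ultimately show "y \<in> {d \<in> topspace T. up_set T {d} \<in> PS T - Fi}"
              using U(3) yt by (auto simp: box_def)
          qed
          moreover have "d \<in> U" using U(2) d up_sub[of "{d}" T] by (auto simp: box_def)
          ultimately show "\<exists>T'. openin T T' \<and> d \<in> T' \<and> T' \<subseteq> {d \<in> topspace T. up_set T {d} \<in> PS T - Fi}"
            using U(1) by blast
        qed
        moreover have "topspace T - {d \<in> topspace T. up_set T {d} \<in> PS T - Fi}
            = {d \<in> topspace T. up_set T {d} \<in> Fi}"
          using up_fin_PS[of _ T] ci closedin_subset[OF ci]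
          by (auto simp: fin_subsets_def uv_topspace)
        ultimately show ?thesis
          by (metis (no_types, lifting) closedin_diff closedin_topspace)
      qed
      have "D \<subseteq> {d \<in> topspace T. up_set T {d} \<in> F1} \<union> {d \<in> topspace T. up_set T {d} \<in> F2}"
        using h Dt by blast
      then have "D \<subseteq> {d \<in> topspace T. up_set T {d} \<in> F1} \<or> D \<subseteq> {d \<in> topspace T. up_set T {d} \<in> F2}"
        using irr pre h unfolding irreducible_in_def by blast
      then show "up_set T ` (\<lambda>d. {d}) ` D \<subseteq> F1 \<or> up_set T ` (\<lambda>d. {d}) ` D \<subseteq> F2" by blast
    qed
  next
    fix U assume oU: "openin T U" and "\<exists>G\<in>(\<lambda>d. {d}) ` D. up_set T G \<subseteq> U"
    then obtain d where d: "d \<in> D" "up_set T {d} \<subseteq> U" by blast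
    then have "d \<in> U" using up_sub[of "{d}" T] Dt by blast
    then show "ev_in N U" unfolding ev_in_def ev F_def using oU d
      by (intro exI[of _ U]) auto
  next
    show "(\<Inter>G\<in>(\<lambda>d. {d}) ` D. up_set T G) \<subseteq> up_set T {x}"
    proof
      fix y assume y: "y \<in> (\<Inter>G\<in>(\<lambda>d. {d}) ` D. up_set T G)"
      then have "y \<in> upper_bounds T D" using Dt unfolding upper_bounds_def up_set_def by auto
      then have "spec_le T x y" using xd unfolding delta_cut_def lower_bounds_def by blast
      then show "y \<in> up_set T {x}" unfolding up_set_def spec_le_def by auto
    qed
  qed
  have "ev_in N V" using V net conv unfolding GSI2_opens_def by blast
  then obtain U where "openin T U" "U \<inter> D \<noteq> {}" "\<forall>y\<in>U \<inter> D. y \<in> V"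
    unfolding ev_in_def ev F_def by blast
  then show ?thesis by blast
qed

lemma up_x_sub_w: "up_set T {x} \<subseteq> \<Inter>(w_set T x)"
proof
  fix y assume y: "y \<in> up_set T {x}"
  then have xy: "spec_le T x y" "x \<in> topspace T" "y \<in> topspace T"
    unfolding up_set_def spec_le_def by auto
  show "y \<in> \<Inter>(w_set T x)"
  proof
    fix Q assume "Q \<in> w_set T x"
    then obtain F where F: "Q = up_set T F" "F \<in> fin_subsets T" "way_below_I2 T F x"
      unfolding w_set_def by blast
    have irr: "irreducible_in T {x}" using xy unfolding irreducible_in_def by blast
    have "x \<in> delta_cut T {x}" using xy
      unfolding delta_cut_def lower_bounds_def upper_bounds_def by blast
    then have "F \<inter> T closure_of {x} \<noteq> {}" using F(3) irr unfolding way_below_I2_def by blast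
    then obtain f where f: "f \<in> F" "f \<in> T closure_of {x}" by blast
    have "f \<in> topspace T" using F(2) f(1) by (auto simp: fin_subsets_def)
    then have "spec_le T f x" using f xy unfolding spec_le_def by blast
    then have "spec_le T f y" using spec_trans[OF _ xy(1)] by blast
    then show "y \<in> Q" using F(1) f(1) xy(3) unfolding up_set_def by blast
  qed
qed

theorem proposition4p7:
  fixes T :: "'a topology"
  assumes "T0_space T"
    and "GSI2_topological T"
  shows "QI2_continuous T"
  unfolding QI2_continuous_def
proof (intro ballI conjI)
  fix x assume x: "x \<in> topspace T"
  define F where "F = (\<lambda>P. \<exists>V\<in>GSI2_opens T. x \<in> V \<and> (\<forall>y\<in>V. P y))"
  have isf: "is_filter F"
  proof
    show "F (\<lambda>x. True)" unfolding F_def using gso_top x by blast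
  next
    fix P Q assume "F (\<lambda>x. P x)" "F (\<lambda>x. Q x)"
    then obtain V1 V2 where "V1 \<in> GSI2_opens T" "x \<in> V1" "\<forall>y\<in>V1. P y"
      "V2 \<in> GSI2_opens T" "x \<in> V2" "\<forall>y\<in>V2. Q y" unfolding F_def by blast
    then show "F (\<lambda>x. P x \<and> Q x)" unfolding F_def
      by (intro bexI[of _ "V1 \<inter> V2"]) (auto intro: gso_int)
  next
    fix P Q assume "\<forall>x. P x \<longrightarrow> Q x" "F (\<lambda>x. P x)"
    then show "F (\<lambda>x. Q x)" unfolding F_def by blast
  qed
  define N where "N = Abs_filter F"
  have ev: "\<And>P. eventually P N \<longleftrightarrow> F P" unfolding N_def by (rule eventually_Abs_filter[OF isf])
  have net: "is_net T N"
    unfolding is_net_def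
  proof
    show "N \<noteq> bot" unfolding eventually_False[symmetric] ev F_def by blast
    show "eventually (\<lambda>y. y \<in> topspace T) N" unfolding ev F_def using gso_top x by blast
  qed
  have "\<forall>U\<in>GSI2_opens T. x \<in> U \<longrightarrow> ev_in N U" unfolding ev_in_def ev F_def by blast
  then have "GSI2_conv T N x" using assms(2) x net unfolding GSI2_topological_def by blast
  then obtain \<F> where fs: "\<F> \<subseteq> fin_subsets T"
    and irr: "irreducible_in (upper_vietoris T) ((up_set T) ` \<F>)"
    and cv: "\<And>U. openin T U \<Longrightarrow> (\<exists>G\<in>\<F>. up_set T G \<subseteq> U) \<Longrightarrow> ev_in N U"
    and int: "(\<Inter>G\<in>\<F>. up_set T G) \<subseteq> up_set T {x}"
    unfolding GSI2_conv_def by blast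
  have Gt: "\<And>G. G \<in> \<F> \<Longrightarrow> G \<subseteq> topspace T" using fs by (auto simp: fin_subsets_def)
  have wb: "way_below_I2 T G x" if G: "G \<in> \<F>" for G
    unfolding way_below_I2_def
  proof (intro allI impI)
    fix D assume D: "irreducible_in T D" "x \<in> delta_cut T D"
    show "G \<inter> T closure_of D \<noteq> {}"
    proof
      assume e: "G \<inter> T closure_of D = {}"
      define U where "U = topspace T - T closure_of D"
      have oU: "openin T U" unfolding U_def by (simp add: openin_diff)
      have "up_set T G \<inter> T closure_of D = {}" using up_closed_disj[OF closedin_closure_of e] .
      then have "up_set T G \<subseteq> U" unfolding U_def up_set_def by blast
      then have "ev_in N U" using cv[OF oU] G by blast
      then obtain V where V: "V \<in> GSI2_opens T" "x \<in> V" "V \<subseteq> U"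
        unfolding ev_in_def ev F_def by blast
      have "V \<inter> D \<noteq> {}" using net_D[OF D V(1,2)] .
      moreover have "D \<subseteq> T closure_of D"
        using D(1) closure_of_subset[of D T] by (auto simp: irreducible_in_def)
      ultimately show False using V(3) unfolding U_def by blast
    qed
  qed
  have inw: "up_set T G \<in> w_set T x" if "G \<in> \<F>" for G
    using wb[OF that] fs that unfolding w_set_def by blast
  have Fne: "\<F> \<noteq> {}" using irr_nonempty[OF irr] by blast
  show "up_set T {x} = \<Inter>(w_set T x)"
  proof
    show "up_set T {x} \<subseteq> \<Inter>(w_set T x)" by (rule up_x_sub_w)
    show "\<Inter>(w_set T x) \<subseteq> up_set T {x}" using int inw by blast
  qed
  show "irreducible_in (upper_vietoris T) (w_set T x)"
    unfolding irreducible_in_def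
  proof (intro conjI allI impI)
    show "w_set T x \<noteq> {}" using inw Fne by blast
    show wsub: "w_set T x \<subseteq> topspace (upper_vietoris T)"
      unfolding uv_topspace w_set_def using up_fin_PS by blast
    fix F1 F2 assume h: "closedin (upper_vietoris T) F1 \<and> closedin (upper_vietoris T) F2 \<and>
        w_set T x \<subseteq> F1 \<union> F2"
    have key: "\<exists>U G. openin T U \<and> G \<in> \<F> \<and> up_set T G \<subseteq> U \<and>
        box T U \<subseteq> topspace (upper_vietoris T) - Fi"
      if ci: "closedin (upper_vietoris T) Fi" and ns: "\<not> w_set T x \<subseteq> Fi" for Fi
    proof -
      obtain Q where Q: "Q \<in> w_set T x" "Q \<notin> Fi" using ns by blast
      then obtain H where H: "Q = up_set T H" "H \<in> fin_subsets T" "way_below_I2 T H x"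
        unfolding w_set_def by blast
      have oi: "openin (upper_vietoris T) (topspace (upper_vietoris T) - Fi)"
        using ci by (simp add: closedin_def)
      have "Q \<in> topspace (upper_vietoris T) - Fi" using Q wsub by blast
      then obtain U where U: "openin T U" "Q \<in> box T U" "box T U \<subseteq> topspace (upper_vietoris T) - Fi"
        using uv_open_basis[OF oi] by blast
      have "H \<subseteq> U" using H(1,2) U(2) up_sub[of H T] by (auto simp: box_def fin_subsets_def)
      then obtain G where "G \<in> \<F>" "G \<subseteq> U" using rudin[OF irr fs int x H(3) _ U(1)] by blast
      then show ?thesis using U up_open[OF U(1)] by blast
    qed
    show "w_set T x \<subseteq> F1 \<or> w_set T x \<subseteq> F2"
    proof (rule ccontr)
      assume nn: "\<not> (w_set T x \<subseteq> F1 \<or> w_set T x \<subseteq> F2)"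
      obtain U1 G1 where U1: "openin T U1" "G1 \<in> \<F>" "up_set T G1 \<subseteq> U1"
          "box T U1 \<subseteq> topspace (upper_vietoris T) - F1"
        using key[of F1] h nn by blast
      obtain U2 G2 where U2: "openin T U2" "G2 \<in> \<F>" "up_set T G2 \<subseteq> U2"
          "box T U2 \<subseteq> topspace (upper_vietoris T) - F2"
        using key[of F2] h nn by blast
      obtain G3 where G3: "G3 \<in> \<F>" "up_set T G3 \<subseteq> U1 \<inter> U2"
        using irr_fam[OF irr U1(1) U2(1) U1(2,3) U2(2,3)] by blast
      have "up_set T G3 \<in> PS T" using up_fin_PS fs G3(1) by blast
      then have "up_set T G3 \<in> box T U1 \<inter> box T U2" using G3(2) by (auto simp: box_def)
      moreover have "up_set T G3 \<in> F1 \<union> F2" using inw[OF G3(1)] h by blast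
      ultimately show False using U1(4) U2(4) by blast
    qed
  qed
qed

end
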